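(* Let $x,y:\mathbb{Z}\to\mathbb{R}$ be the coordinates of the vertices of a polygon indexed by $u\in\mathbb{Z}$, let $X+ih_1$, $Y+ih_2$ be their discrete analytic extensions, $h=(h_1,h_2)$, and let $F:\mathbb{Z}^2\to\mathbb{R}$ satisfy $F(u+1,v)-F(u,v)=-[h(u+\tfrac12,v-\tfrac12),h(u+\tfrac12,v+\tfrac12)]$ and $F(u,v+1)-F(u,v)=[h(u-\tfrac12,v+\tfrac12),h(u+\tfrac12,v+\tfrac12)]$. Let $Q=(X,Y,F):\mathbb{Z}^2\to\mathbb{R}^3$. Then $Q$ is a discrete definite improper affine sphere: for every $(u,v)\in\mathbb{Z}^2$ the four points $Q(u,v),Q(u+1,v),Q(u,v+1),Q(u+1,v+1)$ are coplanar, and the discrete Laplacian $Q(u+1,v)+Q(u,v+1)+Q(u-1,v)+Q(u,v-1)-4Q(u,v)$ is parallel to the $z$-axis.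
   Context: $[X,Y]$ is the $2\times2$ determinant with columns $X,Y$. With $(\mathbb{Z}^2)^*=(\mathbb{Z}+\tfrac12)^2$, functions $g:\mathbb{Z}^2\to\mathbb{R}$, $k:(\mathbb{Z}^2)^*\to\mathbb{R}$ form a discrete analytic function $g+ik$ if $g(u+1,v)-g(u,v)=k(u+\tfrac12,v+\tfrac12)-k(u+\tfrac12,v-\tfrac12)$ and $g(u,v+1)-g(u,v)=-(k(u+\tfrac12,v+\tfrac12)-k(u-\tfrac12,v+\tfrac12))$ for all $(u,v)$. The discrete analytic extension of $x$ is the unique $X+ih_1$ with $X(u,0)=x(u)$ and $h_1(u+\tfrac12,\tfrac12)=-h_1(u+\tfrac12,-\tfrac12)$; likewise $Y+ih_2$ for $y$. A map $Q:\mathbb{Z}^2\to\mathbb{R}^3$ is a discrete definite improper affine sphere if all elementary quadrilaterals $Q(u,v),Q(u+1,v),Q(u,v+1),Q(u+1,v+1)$ are planar and there is a fixed direction $\xi$ to which every discrete Laplacian of $Q$ is parallel. *)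

theory Defs
  imports "HOL-Analysis.Analysis"
begin

text \<open>Convention: a function on the dual lattice (Z^2)^* = (Z+1/2)^2 is encoded as
  k :: int => int => real with  k i j  standing for  k(i+1/2, j+1/2).\<close>

definition det2 :: "real \<times> real \<Rightarrow> real \<times> real \<Rightarrow> real" where
  "det2 A B = fst A * snd B - snd A * fst B"

definition discrete_analytic :: "(int \<Rightarrow> int \<Rightarrow> real) \<Rightarrow> (int \<Rightarrow> int \<Rightarrow> real) \<Rightarrow> bool" where
  "discrete_analytic g k \<longleftrightarrow>
     (\<forall>u v. g (u+1) v - g u v = k u v - k u (v-1)) \<and>
     (\<forall>u v. g u (v+1) - g u v = - (k u v - k (u-1) v))"

definition discrete_analytic_extension ::
    "(int \<Rightarrow> real) \<Rightarrow> (int \<Rightarrow> int \<Rightarrow> real) \<Rightarrow> (int \<Rightarrow> int \<Rightarrow> real) \<Rightarrow> bool" where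
  "discrete_analytic_extension x g k \<longleftrightarrow>
     discrete_analytic g k \<and> (\<forall>u. g u 0 = x u) \<and> (\<forall>u. k u 0 = - k u (-1))"

definition discrete_laplacian :: "(int \<Rightarrow> int \<Rightarrow> real^3) \<Rightarrow> int \<Rightarrow> int \<Rightarrow> real^3" where
  "discrete_laplacian Q u v =
     Q (u+1) v + Q u (v+1) + Q (u-1) v + Q u (v-1) - 4 *\<^sub>R Q u v"

definition discrete_definite_improper_affine_sphere ::
    "(int \<Rightarrow> int \<Rightarrow> real^3) \<Rightarrow> real^3 \<Rightarrow> bool" where
  "discrete_definite_improper_affine_sphere Q \<xi> \<longleftrightarrow>
     \<xi> \<noteq> 0 \<and>
     (\<forall>u v. coplanar {Q u v, Q (u+1) v, Q u (v+1), Q (u+1) (v+1)}) \<and>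
     (\<forall>u v. \<exists>c. discrete_laplacian Q u v = c *\<^sub>R \<xi>)"

end

theory Submission
  imports Defs
begin

lemma plane_pt:
  fixes P e f :: "'a::real_vector"
  shows "P + s *\<^sub>R e + t *\<^sub>R f \<in> affine hull {P, P+e, P+f}"
proof -
  have "P + s *\<^sub>R e + t *\<^sub>R f = (1-s-t) *\<^sub>R P + s *\<^sub>R (P+e) + t *\<^sub>R (P+f)"
    by (simp add: algebra_simps)
  then show ?thesis unfolding affine_hull_3 by force
qed

lemma coplanar_gen:
  fixes P e f :: "'a::real_vector"
  assumes "\<And>q. q \<in> S \<Longrightarrow> \<exists>s t. q = P + s *\<^sub>R e + t *\<^sub>R f"
  shows "coplanar S"
  unfolding coplanar_def
  using assms plane_pt by blast

lemma harm:
  assumes "discrete_analytic g k"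
  shows "g (u+1) v + g u (v+1) + g (u-1) v + g u (v-1) - 4 * g u v = 0"
proof -
  from assms have A: "\<And>u v. g (u+1) v - g u v = k u v - k u (v-1)"
     and B: "\<And>u v. g u (v+1) - g u v = - (k u v - k (u-1) v)"
    unfolding discrete_analytic_def by auto
  have a1: "g (u+1) v - g u v = k u v - k u (v-1)" by (rule A)
  have a2: "g u v - g (u-1) v = k (u-1) v - k (u-1) (v-1)" using A[of "u-1" v] by simp
  have b1: "g u (v+1) - g u v = - (k u v - k (u-1) v)" by (rule B)
  have b2: "g u v - g u (v-1) = - (k u (v-1) - k (u-1) (v-1))" using B[of u "v-1"] by simp
  show ?thesis using a1 a2 b1 b2 by linarith
qed

theorem mainTheorem11:
  fixes x y :: "int \<Rightarrow> real"
    and X Y h1 h2 F :: "int \<Rightarrow> int \<Rightarrow> real"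
  assumes extX: "discrete_analytic_extension x X h1"
    and extY: "discrete_analytic_extension y Y h2"
    and F1: "\<And>u v. F (u+1) v - F u v = - det2 (h1 u (v-1), h2 u (v-1)) (h1 u v, h2 u v)"
    and F2: "\<And>u v. F u (v+1) - F u v = det2 (h1 (u-1) v, h2 (u-1) v) (h1 u v, h2 u v)"
  shows "discrete_definite_improper_affine_sphere
           (\<lambda>u v. vector [X u v, Y u v, F u v]) (vector [0, 0, 1])"
proof -
  have aX: "discrete_analytic X h1" and aY: "discrete_analytic Y h2"
    using extX extY unfolding discrete_analytic_extension_def by auto
  from aX have XA: "\<And>u v. X (u+1) v - X u v = h1 u v - h1 u (v-1)"
     and XB: "\<And>u v. X u (v+1) - X u v = - (h1 u v - h1 (u-1) v)"
    unfolding discrete_analytic_def by auto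
  from aY have YA: "\<And>u v. Y (u+1) v - Y u v = h2 u v - h2 u (v-1)"
     and YB: "\<And>u v. Y u (v+1) - Y u v = - (h2 u v - h2 (u-1) v)"
    unfolding discrete_analytic_def by auto
  let ?Q = "\<lambda>u v. vector [X u v, Y u v, F u v] :: real^3"
  have nz: "(vector [0, 0, 1] :: real^3) \<noteq> 0"
  proof
    assume "(vector [0, 0, 1] :: real^3) = 0"
    then have "(vector [0, 0, 1] :: real^3) $ 3 = 0" by simp
    then show False by simp
  qed
  have cop: "coplanar {?Q u v, ?Q (u+1) v, ?Q u (v+1), ?Q (u+1) (v+1)}" for u v
  proof (rule coplanar_gen[where P="?Q u v" and e="vector [1,0,h2 u v]" and f="vector [0,1,- h1 u v]"])
    fix q assume q: "q \<in> {?Q u v, ?Q (u+1) v, ?Q u (v+1), ?Q (u+1) (v+1)}"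
    have xa: "X (u+1) v = X u v + (h1 u v - h1 u (v-1))" using XA[of u v] by linarith
    have ya: "Y (u+1) v = Y u v + (h2 u v - h2 u (v-1))" using YA[of u v] by linarith
    have fa: "F (u+1) v = F u v - det2 (h1 u (v-1), h2 u (v-1)) (h1 u v, h2 u v)" using F1[of u v] by linarith
    have xb: "X u (v+1) = X u v - (h1 u v - h1 (u-1) v)" using XB[of u v] by linarith
    have yb: "Y u (v+1) = Y u v - (h2 u v - h2 (u-1) v)" using YB[of u v] by linarith
    have fb: "F u (v+1) = F u v + det2 (h1 (u-1) v, h2 (u-1) v) (h1 u v, h2 u v)" using F2[of u v] by linarith
    have xc: "X (u+1) (v+1) = X (u+1) v - (h1 (u+1) v - h1 u v)" using XB[of "u+1" v] by simp
    have yc: "Y (u+1) (v+1) = Y (u+1) v - (h2 (u+1) v - h2 u v)" using YB[of "u+1" v] by simp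
    have fc: "F (u+1) (v+1) = F (u+1) v + det2 (h1 u v, h2 u v) (h1 (u+1) v, h2 (u+1) v)" using F2[of "u+1" v] by simp
    let ?e = "vector [1,0,h2 u v] :: real^3" and ?f = "vector [0,1,- h1 u v] :: real^3"
    have key: "\<And>s t a b c. a = X u v + s \<Longrightarrow> b = Y u v + t \<Longrightarrow> c = F u v + s * h2 u v - t * h1 u v
       \<Longrightarrow> vector [a,b,c] = ?Q u v + s *\<^sub>R ?e + t *\<^sub>R ?f"
      by (simp add: vec_eq_iff forall_3 vector_3)
    have "\<exists>s t. vector [a,b,c] = ?Q u v + s *\<^sub>R ?e + t *\<^sub>R ?f"
      if "a = X u v + s" "b = Y u v + t" "c = F u v + s * h2 u v - t * h1 u v" for a b c s t
      using key[OF that] by blast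
    note ex = this
    from q consider "q = ?Q u v" | "q = ?Q (u+1) v" | "q = ?Q u (v+1)" | "q = ?Q (u+1) (v+1)" by blast
    then show "\<exists>s t. q = ?Q u v + s *\<^sub>R ?e + t *\<^sub>R ?f"
    proof cases
      case 1 then show ?thesis using ex[of "X u v" 0 "Y u v" 0 "F u v"] by simp
    next
      case 2 then show ?thesis
        using ex[of "X (u+1) v" "h1 u v - h1 u (v-1)" "Y (u+1) v" "h2 u v - h2 u (v-1)" "F (u+1) v"] xa ya fa
        by (simp add: det2_def algebra_simps)
    next
      case 3 then show ?thesis
        using ex[of "X u (v+1)" "- (h1 u v - h1 (u-1) v)" "Y u (v+1)" "- (h2 u v - h2 (u-1) v)" "F u (v+1)"] xb yb fb
        by (simp add: det2_def algebra_simps)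
    next
      case 4 then show ?thesis
        using ex[of "X (u+1) (v+1)" "h1 u v - h1 u (v-1) - (h1 (u+1) v - h1 u v)"
                    "Y (u+1) (v+1)" "h2 u v - h2 u (v-1) - (h2 (u+1) v - h2 u v)" "F (u+1) (v+1)"] xa ya fa xc yc fc
        by (simp add: det2_def algebra_simps)
    qed
  qed
  have lap: "\<exists>c. discrete_laplacian ?Q u v = c *\<^sub>R vector [0, 0, 1]" for u v
  proof -
    have hx: "X (u+1) v + X u (v+1) + X (u-1) v + X u (v-1) - 4 * X u v = 0" by (rule harm[OF aX])
    have hy: "Y (u+1) v + Y u (v+1) + Y (u-1) v + Y u (v-1) - 4 * Y u v = 0" by (rule harm[OF aY])
    show ?thesis
      apply (rule exI[of _ "F (u+1) v + F u (v+1) + F (u-1) v + F u (v-1) - 4 * F u v"])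
      using hx hy by (simp add: discrete_laplacian_def vec_eq_iff forall_3 vector_3)
  qed
  show ?thesis unfolding discrete_definite_improper_affine_sphere_def
    using nz cop lap by blast
qed

end
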